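(* Let $\mathbb{T}^*_{\mathsf{ctl}} = \mathsf{src}!b_1(\mathtt{unit}).\mathsf{src}!b_2(\mathtt{unit}).\mu\mathbf{t}.\,\mathsf{src}?b_1(\mathtt{unit}).\mathsf{sk}?b_1(\mathtt{unit}).\mathsf{sk}!b_1(\mathtt{unit}).\mathsf{src}!b_1(\mathtt{unit}).\mathsf{src}?b_2(\mathtt{unit}).\mathsf{sk}?b_2(\mathtt{unit}).\mathsf{sk}!b_2(\mathtt{unit}).\mathsf{src}!b_2(\mathtt{unit}).\mathbf{t}$ and $\mathbb{T}_{\mathsf{ctl}} = \mu\mathbf{t}.\,\mathsf{src}!b_1(\mathtt{unit}).\mathsf{src}?b_1(\mathtt{unit}).\mathsf{sk}?b_1(\mathtt{unit}).\mathsf{sk}!b_1(\mathtt{unit}).\mathsf{src}!b_2(\mathtt{unit}).\mathsf{src}?b_2(\mathtt{unit}).\mathsf{sk}?b_2(\mathtt{unit}).\mathsf{sk}!b_2(\mathtt{unit}).\mathbf{t}$, where $\mathsf{src}$ and $\mathsf{sk}$ are distinct participants and $b_1,b_2$ are labels. Then $\mathbb{T}^*_{\mathsf{ctl}}\leqslant\mathbb{T}_{\mathsf{ctl}}$.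
   Context: Sorts: $\mathsf{S} ::= \mathtt{nat} \mid \mathtt{int} \mid \mathtt{bool} \mid \mathtt{unit}$; subsorting $\leq:$ is the least reflexive relation with $\mathtt{nat}\leq:\mathtt{int}$. Session types: $\mathbb{T} ::= \&_{i\in I}\mathsf{p}?\ell_i(\mathsf{S}_i).\mathbb{T}_i \mid \oplus_{i\in I}\mathsf{p}!\ell_i(\mathsf{S}_i).\mathbb{T}_i \mid \mathtt{end} \mid \mu\mathbf{t}.\mathbb{T} \mid \mathbf{t}$ (singleton choices written without $\&/\oplus$; $?$ is input from, $!$ is output to the named participant). Session trees: possibly infinite terms $\mathsf{T} ::= \mathtt{end} \mid \&_{i\in I}\mathsf{p}?\ell_i(\mathsf{S}_i).\mathsf{T}_i \mid \oplus_{i\in I}\mathsf{p}!\ell_i(\mathsf{S}_i).\mathsf{T}_i$ (coinductively); $\mathcal{T}(\mathbb{T})$ is the tree obtained from a closed type by unfolding recursion. SISO trees: $\mathsf{W} ::= \mathtt{end} \mid \mathsf{p}?\ell(\mathsf{S}).\mathsf{W} \mid \mathsf{p}!\ell(\mathsf{S}).\mathsf{W}$; $\mathrm{act}(\mathsf{W})$ is the set of symbols $\mathsf{p}?$/$\mathsf{p}!$ of inputs/outputs occurring in $\mathsf{W}$. $\mathcal{A}^{(\mathsf{p})}$: nonempty finite sequences of inputs $\mathsf{q}?\ell(\mathsf{S})$, $\mathsf{q}\neq\mathsf{p}$; $\mathcal{B}^{(\mathsf{p})}$: nonempty finite sequences of inputs $\mathsf{r}?\ell(\mathsf{S})$ (any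 $\mathsf{r}$) and outputs $\mathsf{q}!\ell(\mathsf{S})$, $\mathsf{q}\neq\mathsf{p}$ (used as prefixes). SISO refinement $\lesssim$: largest relation closed backward under $\mathsf{p}?\ell(\mathsf{S}).\mathsf{W}\lesssim\mathsf{p}?\ell(\mathsf{S}').\mathsf{W}'$ if $\mathsf{S}'\leq:\mathsf{S}$, $\mathsf{W}\lesssim\mathsf{W}'$; $\mathsf{p}?\ell(\mathsf{S}).\mathsf{W}\lesssim\mathcal{A}^{(\mathsf{p})}.\mathsf{p}?\ell(\mathsf{S}').\mathsf{W}'$ if $\mathsf{S}'\leq:\mathsf{S}$, $\mathsf{W}\lesssim\mathcal{A}^{(\mathsf{p})}.\mathsf{W}'$, $\mathrm{act}(\mathsf{W})=\mathrm{act}(\mathcal{A}^{(\mathsf{p})}.\mathsf{W}')$; $\mathsf{p}!\ell(\mathsf{S}).\mathsf{W}\lesssim\mathsf{p}!\ell(\mathsf{S}').\mathsf{W}'$ if $\mathsf{S}\leq:\mathsf{S}'$, $\mathsf{W}\lesssim\mathsf{W}'$; $\mathsf{p}!\ell(\mathsf{S}).\mathsf{W}\lesssim\mathcal{B}^{(\mathsf{p})}.\mathsf{p}!\ell(\mathsf{S}').\mathsf{W}'$ if $\mathsf{S}\leq:\mathsf{S}'$, $\mathsf{W}\lesssim\mathcal{B}^{(\mathsf{p})}.\mathsf{W}'$, $\mathrm{act}(\mathsf{W})=\mathrm{act}(\mathcal{B}^{(\mathsf{p})}.\mathsf{W}')$; $\mathtt{end}\lesssim\mathtt{end}$. SO trees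 $\mathsf{U} ::= \mathtt{end}\mid\&_{i\in I}\mathsf{p}?\ell_i(\mathsf{S}_i).\mathsf{U}_i\mid\mathsf{p}!\ell(\mathsf{S}).\mathsf{U}$, SI trees $\mathsf{V} ::= \mathtt{end}\mid\mathsf{p}?\ell(\mathsf{S}).\mathsf{V}\mid\oplus_{i\in I}\mathsf{p}!\ell_i(\mathsf{S}_i).\mathsf{V}_i$; $[\![\mathsf{T}]\!]_{SO}$ is the set of SO trees obtained from $\mathsf{T}$ by keeping exactly one branch (with its payload) at every selection node and all branches at branching nodes, and $[\![\mathsf{T}]\!]_{SI}$ the set of SI trees obtained by keeping exactly one branch at every branching node and all branches at selection nodes. Subtyping: $\mathsf{T}\leqslant\mathsf{T}'$ iff $\forall\mathsf{U}\in[\![\mathsf{T}]\!]_{SO}\ \forall\mathsf{V}'\in[\![\mathsf{T}']\!]_{SI}\ \exists\mathsf{W}\in[\![\mathsf{U}]\!]_{SI}\ \exists\mathsf{W}'\in[\![\mathsf{V}']\!]_{SO}$: $\mathsf{W}\lesssim\mathsf{W}'$; $\mathbb{T}\leqslant\mathbb{T}'$ iff $\mathcal{T}(\mathbb{T})\leqslant\mathcal{T}(\mathbb{T}')$. *)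

theory Defs
  imports Main
begin

datatype sort = SNat | SInt | SBool | SUnit

definition subsort :: "sort \<Rightarrow> sort \<Rightarrow> bool" where
  "subsort S S' \<longleftrightarrow> S = S' \<or> (S = SNat \<and> S' = SInt)"

type_synonym part = string
type_synonym label = string

datatype ty =
    TEnd
  | is_TBra: TBra (tpart: part) (tbrs: "(label \<times> sort \<times> ty) list")   \<comment> \<open>external choice: p?l_i(S_i).T_i\<close>
  | is_TSel: TSel (tpart: part) (tbrs: "(label \<times> sort \<times> ty) list")   \<comment> \<open>internal choice: p!l_i(S_i).T_i\<close>
  | TMu string ty
  | TVar string

text \<open>Substitution (only used with closed substituends, so no capture).\<close>
primrec subst :: "string \<Rightarrow> ty \<Rightarrow> ty \<Rightarrow> ty" where
  "subst x S TEnd = TEnd"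
| "subst x S (TBra p bs) = TBra p (map (map_prod id (map_prod id (subst x S))) bs)"
| "subst x S (TSel p bs) = TSel p (map (map_prod id (map_prod id (subst x S))) bs)"
| "subst x S (TMu y T) = (if x = y then TMu y T else TMu y (subst x S T))"
| "subst x S (TVar y) = (if x = y then S else TVar y)"

primrec mu_depth :: "ty \<Rightarrow> nat" where
  "mu_depth (TMu x T) = Suc (mu_depth T)"
| "mu_depth TEnd = 0"
| "mu_depth (TBra p bs) = 0"
| "mu_depth (TSel p bs) = 0"
| "mu_depth (TVar x) = 0"

fun unfold1 :: "ty \<Rightarrow> ty" where
  "unfold1 (TMu x T) = subst x (TMu x T) T"
| "unfold1 T = T"

text \<open>Unfold all leading recursions (for closed contractive types this yields
  a type whose head is end, a branching or a selection).\<close>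
definition unf_head :: "ty \<Rightarrow> ty" where
  "unf_head T = (unfold1 ^^ mu_depth T) T"

codatatype stree =
    End
  | Bra part "(label \<times> sort \<times> stree) list"
  | Sel part "(label \<times> sort \<times> stree) list"

primcorec tree_of :: "ty \<Rightarrow> stree" where
  "tree_of T = (let H = unf_head T in
      if is_TBra H then Bra (tpart H) (map (map_prod id (map_prod id tree_of)) (tbrs H))
      else if is_TSel H then Sel (tpart H) (map (map_prod id (map_prod id tree_of)) (tbrs H))
      else End)"

text \<open>[[T]]_SO: keep exactly one branch at each selection, all at each branching.\<close>
coinductive so_of :: "stree \<Rightarrow> stree \<Rightarrow> bool" where
  so_end: "so_of End End"
| so_bra: "length cs = length bs \<Longrightarrow>
    (\<forall>i<length bs. fst (bs ! i) = fst (cs ! i) \<and> fst (snd (bs ! i)) = fst (snd (cs ! i))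
        \<and> so_of (snd (snd (bs ! i))) (snd (snd (cs ! i)))) \<Longrightarrow>
    so_of (Bra p bs) (Bra p cs)"
| so_sel: "(l, S, t) \<in> set bs \<Longrightarrow> so_of t u \<Longrightarrow> so_of (Sel p bs) (Sel p [(l, S, u)])"

text \<open>[[T]]_SI: keep exactly one branch at each branching, all at each selection.\<close>
coinductive si_of :: "stree \<Rightarrow> stree \<Rightarrow> bool" where
  si_end: "si_of End End"
| si_sel: "length cs = length bs \<Longrightarrow>
    (\<forall>i<length bs. fst (bs ! i) = fst (cs ! i) \<and> fst (snd (bs ! i)) = fst (snd (cs ! i))
        \<and> si_of (snd (snd (bs ! i))) (snd (snd (cs ! i)))) \<Longrightarrow>
    si_of (Sel p bs) (Sel p cs)"
| si_bra: "(l, S, t) \<in> set bs \<Longrightarrow> si_of t u \<Longrightarrow> si_of (Bra p bs) (Bra p [(l, S, u)])"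

datatype dir = DIn | DOut

inductive occurs :: "dir \<Rightarrow> part \<Rightarrow> stree \<Rightarrow> bool" where
  occ_in_here: "occurs DIn p (Bra p bs)"
| occ_out_here: "occurs DOut p (Sel p bs)"
| occ_in_later: "(l, S, t) \<in> set bs \<Longrightarrow> occurs d q t \<Longrightarrow> occurs d q (Bra p bs)"
| occ_out_later: "(l, S, t) \<in> set bs \<Longrightarrow> occurs d q t \<Longrightarrow> occurs d q (Sel p bs)"

definition act :: "stree \<Rightarrow> (dir \<times> part) set" where
  "act W = {(d, p). occurs d p W}"

datatype action = AIn part label sort | AOut part label sort

fun pre :: "action list \<Rightarrow> stree \<Rightarrow> stree" where
  "pre [] W = W"
| "pre (AIn q l S # A) W = Bra q [(l, S, pre A W)]"
| "pre (AOut q l S # A) W = Sel q [(l, S, pre A W)]"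

definition isA :: "part \<Rightarrow> action list \<Rightarrow> bool" where
  "isA p A \<longleftrightarrow> A \<noteq> [] \<and> (\<forall>a \<in> set A. \<exists>q l S. a = AIn q l S \<and> q \<noteq> p)"

definition isB :: "part \<Rightarrow> action list \<Rightarrow> bool" where
  "isB p B \<longleftrightarrow> B \<noteq> [] \<and>
     (\<forall>a \<in> set B. (\<exists>r l S. a = AIn r l S) \<or> (\<exists>q l S. a = AOut q l S \<and> q \<noteq> p))"

coinductive refines :: "stree \<Rightarrow> stree \<Rightarrow> bool" where
  ref_in: "subsort S' S \<Longrightarrow> refines W W' \<Longrightarrow>
     refines (Bra p [(l, S, W)]) (Bra p [(l, S', W')])"
| ref_inA: "isA p A \<Longrightarrow> subsort S' S \<Longrightarrow> refines W (pre A W') \<Longrightarrow>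
     act W = act (pre A W') \<Longrightarrow>
     refines (Bra p [(l, S, W)]) (pre A (Bra p [(l, S', W')]))"
| ref_out: "subsort S S' \<Longrightarrow> refines W W' \<Longrightarrow>
     refines (Sel p [(l, S, W)]) (Sel p [(l, S', W')])"
| ref_outB: "isB p B \<Longrightarrow> subsort S S' \<Longrightarrow> refines W (pre B W') \<Longrightarrow>
     act W = act (pre B W') \<Longrightarrow>
     refines (Sel p [(l, S, W)]) (pre B (Sel p [(l, S', W')]))"
| ref_end: "refines End End"

definition subtree :: "stree \<Rightarrow> stree \<Rightarrow> bool" where
  "subtree T T' \<longleftrightarrow>
     (\<forall>U. so_of T U \<longrightarrow> (\<forall>V'. si_of T' V' \<longrightarrow>
        (\<exists>W W'. si_of U W \<and> so_of V' W' \<and> refines W W')))"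

definition subtype :: "ty \<Rightarrow> ty \<Rightarrow> bool" where
  "subtype T T' \<longleftrightarrow> subtree (tree_of T) (tree_of T')"

abbreviation inp :: "part \<Rightarrow> label \<Rightarrow> sort \<Rightarrow> ty \<Rightarrow> ty" where
  "inp p l S T \<equiv> TBra p [(l, S, T)]"
abbreviation outp :: "part \<Rightarrow> label \<Rightarrow> sort \<Rightarrow> ty \<Rightarrow> ty" where
  "outp p l S T \<equiv> TSel p [(l, S, T)]"

definition T_ctl_star :: "part \<Rightarrow> part \<Rightarrow> label \<Rightarrow> label \<Rightarrow> ty" where
  "T_ctl_star src sk b1 b2 =
     outp src b1 SUnit (outp src b2 SUnit (TMu ''t''
       (inp src b1 SUnit (inp sk b1 SUnit (outp sk b1 SUnit (outp src b1 SUnit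
       (inp src b2 SUnit (inp sk b2 SUnit (outp sk b2 SUnit (outp src b2 SUnit
         (TVar ''t'')))))))))))"

definition T_ctl :: "part \<Rightarrow> part \<Rightarrow> label \<Rightarrow> label \<Rightarrow> ty" where
  "T_ctl src sk b1 b2 =
     TMu ''t''
       (outp src b1 SUnit (inp src b1 SUnit (inp sk b1 SUnit (outp sk b1 SUnit
       (outp src b2 SUnit (inp src b2 SUnit (inp sk b2 SUnit (outp sk b2 SUnit
         (TVar ''t'')))))))))"

end

theory Submission imports Defs begin
coinductive siso :: "stree \<Rightarrow> bool" where
  "siso End"
| "siso t \<Longrightarrow> siso (Bra p [(l,S,t)])"
| "siso t \<Longrightarrow> siso (Sel p [(l,S,t)])"

lemma pre_app[simp]: "pre A (pre B W) = pre (A @ B) W"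
  by (induction A W rule: pre.induct) auto

lemma cyc_cons: assumes "x = pre L x" "L \<noteq> []" shows "\<exists>a M'. pre M x = pre (a # M') x"
proof (cases M)
  case Nil
  then obtain a L' where "L = a # L'" using assms(2) by (cases L) auto
  then show ?thesis using assms(1) Nil by auto
qed auto

lemma siso_cyc: assumes hx: "x = pre L x" "L \<noteq> []" shows "siso (pre M x)"
proof (rule siso.coinduct[of "\<lambda>t. \<exists>M. t = pre M x"])
  show "\<exists>M'. pre M x = pre M' x" by blast
next
  fix t assume "\<exists>M. t = pre M x" then obtain M where t: "t = pre M x" by blast
  obtain a M' where aM: "pre M x = pre (a # M') x" using cyc_cons[OF hx] by blast
  show "t = End \<or> (\<exists>ta p l S. t = Bra p [(l, S, ta)] \<and> ((\<exists>M. ta = pre M x) \<or> siso ta)) \<or>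
         (\<exists>ta p l S. t = Sel p [(l, S, ta)] \<and> ((\<exists>M. ta = pre M x) \<or> siso ta))"
    using aM t by (cases a) auto
qed

lemma so_of_siso: "so_of T U \<Longrightarrow> siso T \<Longrightarrow> U = T"
proof (coinduction arbitrary: T U rule: stree.coinduct)
  case (Eq_stree U T)
  from Eq_stree(2,1) show ?case
  proof (cases rule: siso.cases)
    case 1 then show ?thesis using Eq_stree by (auto elim: so_of.cases)
  next
    case (2 t p l S)
    then show ?thesis using Eq_stree(1)
      apply -
      apply (erule so_of.cases)
      apply (auto simp: length_Suc_conv)
      done
  next
    case (3 t p l S)
    then show ?thesis using Eq_stree(1)
      apply -
      apply (erule so_of.cases)
      apply auto
      done
  qed
qed

lemma si_of_siso: "si_of T U \<Longrightarrow> siso T \<Longrightarrow> U = T"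
proof (coinduction arbitrary: T U rule: stree.coinduct)
  case (Eq_stree U T)
  from Eq_stree(2,1) show ?case
  proof (cases rule: siso.cases)
    case 1 then show ?thesis using Eq_stree by (auto elim: si_of.cases)
  next
    case (2 t p l S)
    then show ?thesis using Eq_stree(1)
      apply -
      apply (erule si_of.cases)
      apply (auto simp: length_Suc_conv)
      done
  next
    case (3 t p l S)
    then show ?thesis using Eq_stree(1)
      apply -
      apply (erule si_of.cases)
      apply (auto simp: length_Suc_conv)
      done
  qed
qed

lemma so_of_refl: "siso T \<Longrightarrow> so_of T T"
proof (coinduction arbitrary: T rule: so_of.coinduct)
  case (so_of T)
  then show ?case by (cases rule: siso.cases) auto
qed

lemma si_of_refl: "siso T \<Longrightarrow> si_of T T"
proof (coinduction arbitrary: T rule: si_of.coinduct)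
  case (si_of T)
  then show ?case by (cases rule: siso.cases) auto
qed

fun actsym :: "action \<Rightarrow> dir \<times> part" where
  "actsym (AIn p l S) = (DIn, p)"
| "actsym (AOut p l S) = (DOut, p)"

lemma occurs_bra1: "occurs d q (Bra p [(l,S,W)]) \<longleftrightarrow> (d,q) = (DIn,p) \<or> occurs d q W"
  by (auto elim: occurs.cases intro: occurs.intros)
lemma occurs_sel1: "occurs d q (Sel p [(l,S,W)]) \<longleftrightarrow> (d,q) = (DOut,p) \<or> occurs d q W"
  by (auto elim: occurs.cases intro: occurs.intros)

lemma act_pre: "act (pre M W) = set (map actsym M) \<union> act W"
  by (induction M W rule: pre.induct) (auto simp: act_def occurs_bra1 occurs_sel1)

lemma cyc_cons2: assumes "x = pre L x" "L \<noteq> []"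
  shows "\<exists>a M'. pre M x = pre (a # M') x \<and> set (map actsym (a # M')) \<subseteq> set (map actsym M) \<union> set (map actsym L)"
proof (cases M)
  case Nil
  then obtain a L' where "L = a # L'" using assms(2) by (cases L) auto
  then show ?thesis using assms(1) Nil by auto
qed auto

lemma occurs_cyc: "occurs d q t \<Longrightarrow> t = pre M x \<Longrightarrow> x = pre L x \<Longrightarrow> L \<noteq> [] \<Longrightarrow>
   (d,q) \<in> set (map actsym M) \<union> set (map actsym L)"
proof (induction arbitrary: M rule: occurs.induct)
  case (occ_in_here p bs)
  obtain a M' where a: "pre M x = pre (a # M') x" "set (map actsym (a # M')) \<subseteq> set (map actsym M) \<union> set (map actsym L)"
    using cyc_cons2[OF occ_in_here(2,3)] by blast
  show ?case using a occ_in_here(1) by (cases a) auto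
next
  case (occ_out_here p bs)
  obtain a M' where a: "pre M x = pre (a # M') x" "set (map actsym (a # M')) \<subseteq> set (map actsym M) \<union> set (map actsym L)"
    using cyc_cons2[OF occ_out_here(2,3)] by blast
  show ?case using a occ_out_here(1) by (cases a) auto
next
  case (occ_in_later l S t bs d q p)
  obtain a M' where a: "pre M x = pre (a # M') x" "set (map actsym (a # M')) \<subseteq> set (map actsym M) \<union> set (map actsym L)"
    using cyc_cons2[OF occ_in_later(5,6)] by blast
  have "t = pre M' x" using a occ_in_later by (cases a) auto
  then have "(d,q) \<in> set (map actsym M') \<union> set (map actsym L)" using occ_in_later by blast
  then show ?case using a by auto
next
  case (occ_out_later l S t bs d q p)
  obtain a M' where a: "pre M x = pre (a # M') x" "set (map actsym (a # M')) \<subseteq> set (map actsym M) \<union> set (map actsym L)"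
    using cyc_cons2[OF occ_out_later(5,6)] by blast
  have "t = pre M' x" using a occ_out_later by (cases a) auto
  then have "(d,q) \<in> set (map actsym M') \<union> set (map actsym L)" using occ_out_later by blast
  then show ?case using a by auto
qed

lemma act_cyc: assumes "x = pre L x" "L \<noteq> []"
  shows "act (pre M x) = set (map actsym M) \<union> set (map actsym L)"
proof -
  have "act x \<subseteq> set (map actsym L)" using occurs_cyc[of _ _ x "[]" x L] assms by (auto simp: act_def)
  moreover have "set (map actsym L) \<subseteq> act x" using act_pre[of L x] assms(1) by auto
  ultimately have "act x = set (map actsym L)" by blast
  then show ?thesis by (simp add: act_pre)
qed


definition stepR :: "(stree \<Rightarrow> stree \<Rightarrow> bool) \<Rightarrow> stree \<Rightarrow> stree \<Rightarrow> bool" where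
 "stepR X x1 x2 \<longleftrightarrow>
      (\<exists>S' S W W' p l.
          x1 = Bra p [(l, S, W)] \<and>
          x2 = Bra p [(l, S', W')] \<and>
          subsort S' S \<and> (X W W' \<or> refines W W')) \<or>
      (\<exists>p A S' S W W' l.
          x1 = Bra p [(l, S, W)] \<and>
          x2 = pre A (Bra p [(l, S', W')]) \<and>
          isA p A \<and>
          subsort S' S \<and>
          (X W (pre A W') \<or> refines W (pre A W')) \<and>
          act W = act (pre A W')) \<or>
      (\<exists>S S' W W' p l.
          x1 = Sel p [(l, S, W)] \<and>
          x2 = Sel p [(l, S', W')] \<and>
          subsort S S' \<and> (X W W' \<or> refines W W')) \<or>
      (\<exists>p B S S' W W' l.
          x1 = Sel p [(l, S, W)] \<and>
          x2 = pre B (Sel p [(l, S', W')]) \<and>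
          isB p B \<and>
          subsort S S' \<and>
          (X W (pre B W') \<or> refines W (pre B W')) \<and>
          act W = act (pre B W')) \<or>
      x1 = End \<and> x2 = End"

lemma ref_coind: "X a b \<Longrightarrow> (\<And>x1 x2. X x1 x2 \<Longrightarrow> stepR X x1 x2) \<Longrightarrow> refines a b"
  unfolding stepR_def by (rule refines.coinduct)

lemma st_in: "subsort S' S \<Longrightarrow> X W W' \<Longrightarrow> stepR X (Bra p [(l,S,W)]) (Bra p [(l,S',W')])"
  unfolding stepR_def by (rule disjI1) blast
lemma st_out: "subsort S S' \<Longrightarrow> X W W' \<Longrightarrow> stepR X (Sel p [(l,S,W)]) (Sel p [(l,S',W')])"
  unfolding stepR_def by (rule disjI2, rule disjI2, rule disjI1) blast
lemma st_outB: "isB p B \<Longrightarrow> subsort S S' \<Longrightarrow> X W (pre B W') \<Longrightarrow> act W = act (pre B W') \<Longrightarrow>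
  stepR X (Sel p [(l,S,W)]) (pre B (Sel p [(l,S',W')]))"
  unfolding stepR_def by (rule disjI2, rule disjI2, rule disjI2, rule disjI1) blast

definition A1 :: "part \<Rightarrow> part \<Rightarrow> label \<Rightarrow> action list" where
  "A1 src sk b = [AIn src b SUnit, AIn sk b SUnit, AOut sk b SUnit]"

definition Lx :: "part \<Rightarrow> part \<Rightarrow> label \<Rightarrow> label \<Rightarrow> action list" where
 "Lx src sk b1 b2 = A1 src sk b1 @ [AOut src b1 SUnit] @ A1 src sk b2 @ [AOut src b2 SUnit]"
definition Ly :: "part \<Rightarrow> part \<Rightarrow> label \<Rightarrow> label \<Rightarrow> action list" where
 "Ly src sk b1 b2 = [AOut src b1 SUnit] @ A1 src sk b1 @ [AOut src b2 SUnit] @ A1 src sk b2"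

lemma main_ref:
  assumes ne: "src \<noteq> sk" and hx: "x = pre (Lx src sk b1 b2) x" and hy: "y = pre (Ly src sk b1 b2) y"
  shows "refines (pre [AOut src b1 SUnit, AOut src b2 SUnit] x) y"
proof -
  let ?U = SUnit
  let ?L = "Lx src sk b1 b2"
  let ?M = "Ly src sk b1 b2"
  let ?a = "A1 src sk b1"
  let ?b = "A1 src sk b2"
  define R where "R a b \<longleftrightarrow>
   (a = pre [AOut src b1 ?U, AOut src b2 ?U] x \<and> b = y) \<or>
   (a = pre [AOut src b2 ?U] x \<and> b = pre (?a @ [AOut src b2 ?U] @ ?b) y) \<or>
   (a = x \<and> b = pre (?a @ ?b) y) \<or>
   (a = pre (drop 1 ?L) x \<and> b = pre (drop 1 ?a @ ?b) y) \<or>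
   (a = pre (drop 2 ?L) x \<and> b = pre (drop 2 ?a @ ?b) y) \<or>
   (a = pre (drop 3 ?L) x \<and> b = pre ?b y) \<or>
   (a = pre (drop 4 ?L) x \<and> b = pre (?b @ drop 1 ?M) y) \<or>
   (a = pre (drop 5 ?L) x \<and> b = pre (drop 1 ?b @ drop 1 ?M) y) \<or>
   (a = pre (drop 6 ?L) x \<and> b = pre (drop 2 ?b @ drop 1 ?M) y)" for a b
  have Lne: "?L \<noteq> []" "?M \<noteq> []" by (simp_all add: Lx_def Ly_def)
  have actx: "act x = set (map actsym ?L)" using act_cyc[OF hx Lne(1), of "[]"] by simp
  have acty: "act (pre N y) = set (map actsym N) \<union> set (map actsym ?M)" for N
    using act_cyc[OF hy Lne(2)] by simp
  have actx2: "act (pre N x) = set (map actsym N) \<union> set (map actsym ?L)" for N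
    using act_cyc[OF hx Lne(1)] by simp
  have su: "subsort SUnit SUnit" by (simp add: subsort_def)
  have iB: "isB src (A1 src sk b)" for b using ne by (auto simp: isB_def A1_def)
  have c1: "stepR R (pre [AOut src b1 ?U, AOut src b2 ?U] x) y"
    apply (subst hy)
    apply (simp add: Ly_def A1_def)
    apply (rule st_out[OF su])
    apply (simp add: R_def A1_def)
    done
  have c2: "stepR R (pre [AOut src b2 ?U] x) (pre (?a @ [AOut src b2 ?U] @ ?b) y)"
  proof -
    have "stepR R (Sel src [(b2,?U,x)]) (pre ?a (Sel src [(b2,?U,pre ?b y)]))"
      apply (rule st_outB[OF iB su])
       apply (simp add: R_def)
      apply (simp only: pre_app actx acty)
      apply (auto simp: Lx_def Ly_def A1_def)
      done
    then show ?thesis by (simp add: A1_def)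
  qed
  have c3: "stepR R x (pre (?a @ ?b) y)"
    apply (subst hx)
    apply (simp add: Lx_def A1_def)
    apply (rule st_in[OF su])
    apply (simp add: R_def A1_def Lx_def)
    done
  have c4: "stepR R (pre (drop 1 ?L) x) (pre (drop 1 ?a @ ?b) y)"
    apply (simp add: Lx_def A1_def)
    apply (rule st_in[OF su])
    apply (simp add: R_def A1_def Lx_def)
    done
  have c5: "stepR R (pre (drop 2 ?L) x) (pre (drop 2 ?a @ ?b) y)"
    apply (simp add: Lx_def A1_def)
    apply (rule st_out[OF su])
    apply (simp add: R_def A1_def Lx_def)
    done
  have c6: "stepR R (pre (drop 3 ?L) x) (pre ?b y)"
  proof -
    have "stepR R (Sel src [(b1,?U,pre (drop 4 ?L) x)]) (pre ?b (Sel src [(b1,?U,pre (drop 1 ?M) y)]))"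
      apply (rule st_outB[OF iB su])
       apply (simp add: R_def)
      apply (simp only: pre_app actx2 acty)
      apply (auto simp: Lx_def Ly_def A1_def)
      done
    then show ?thesis
      apply (subst hy)
      apply (simp add: Lx_def Ly_def A1_def)
      done
  qed
  have c7: "stepR R (pre (drop 4 ?L) x) (pre (?b @ drop 1 ?M) y)"
    apply (simp add: Lx_def A1_def)
    apply (rule st_in[OF su])
    apply (simp add: R_def A1_def Lx_def Ly_def)
    done
  have c8: "stepR R (pre (drop 5 ?L) x) (pre (drop 1 ?b @ drop 1 ?M) y)"
    apply (simp add: Lx_def A1_def)
    apply (rule st_in[OF su])
    apply (simp add: R_def A1_def Lx_def Ly_def)
    done
  have c9: "stepR R (pre (drop 6 ?L) x) (pre (drop 2 ?b @ drop 1 ?M) y)"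
    apply (simp add: Lx_def A1_def)
    apply (rule st_out[OF su])
    apply (simp add: R_def A1_def Lx_def Ly_def)
    done
  show ?thesis
  proof (rule ref_coind[of R])
    show "R (pre [AOut src b1 ?U, AOut src b2 ?U] x) y" by (simp add: R_def)
  next
    fix a b assume hR: "R a b"
    show "stepR R a b" using hR[unfolded R_def] by (elim disjE conjE; simp only: c1 c2 c3 c4 c5 c6 c7 c8 c9)
  qed
qed


lemma tree_of_bra: "tree_of (TBra p bs) = Bra p (map (map_prod id (map_prod id tree_of)) bs)"
  by (subst tree_of.code) (simp add: unf_head_def)
lemma tree_of_sel: "tree_of (TSel p bs) = Sel p (map (map_prod id (map_prod id tree_of)) bs)"
  by (subst tree_of.code) (simp add: unf_head_def)
lemma tree_of_mu_sel: "tree_of (TMu x (TSel p bs)) = tree_of (subst x (TMu x (TSel p bs)) (TSel p bs))"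
  by (simp only: tree_of.code[of "TMu x (TSel p bs)"] tree_of.code[of "subst x (TMu x (TSel p bs)) (TSel p bs)"]) (simp add: unf_head_def)
lemma tree_of_mu_bra: "tree_of (TMu x (TBra p bs)) = tree_of (subst x (TMu x (TBra p bs)) (TBra p bs))"
  by (simp only: tree_of.code[of "TMu x (TBra p bs)"] tree_of.code[of "subst x (TMu x (TBra p bs)) (TBra p bs)"]) (simp add: unf_head_def)

definition TX :: "part \<Rightarrow> part \<Rightarrow> label \<Rightarrow> label \<Rightarrow> ty" where
  "TX src sk b1 b2 = TMu ''t''
       (inp src b1 SUnit (inp sk b1 SUnit (outp sk b1 SUnit (outp src b1 SUnit
       (inp src b2 SUnit (inp sk b2 SUnit (outp sk b2 SUnit (outp src b2 SUnit
         (TVar ''t'')))))))))"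

lemma star_eq: "tree_of (T_ctl_star src sk b1 b2) = pre [AOut src b1 SUnit, AOut src b2 SUnit]
   (tree_of (TX src sk b1 b2))"
  by (simp add: T_ctl_star_def TX_def tree_of_sel)

lemma x_eq: "tree_of (TX src sk b1 b2) = pre (Lx src sk b1 b2) (tree_of (TX src sk b1 b2))"
  unfolding TX_def
  apply (subst tree_of_mu_bra)
  by (simp add: Lx_def A1_def tree_of_sel tree_of_bra)

lemma y_eq: "tree_of (T_ctl src sk b1 b2) = pre (Ly src sk b1 b2) (tree_of (T_ctl src sk b1 b2))"
  unfolding T_ctl_def
  apply (subst tree_of_mu_sel)
  by (simp add: Ly_def A1_def tree_of_sel tree_of_bra)

theorem proposition6p1:
  fixes src sk :: part and b1 b2 :: label
  assumes "src \<noteq> sk"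
  shows "subtype (T_ctl_star src sk b1 b2) (T_ctl src sk b1 b2)"
proof -
  let ?x = "tree_of (TX src sk b1 b2)"
  let ?y = "tree_of (T_ctl src sk b1 b2)"
  let ?s = "tree_of (T_ctl_star src sk b1 b2)"
  have Lne: "Lx src sk b1 b2 \<noteq> []" "Ly src sk b1 b2 \<noteq> []" by (simp_all add: Lx_def Ly_def)
  have ss: "siso ?s" unfolding star_eq by (rule siso_cyc[OF x_eq Lne(1)])
  have sy: "siso ?y" using siso_cyc[OF y_eq Lne(2), of "[]"] by simp
  have r: "refines ?s ?y" unfolding star_eq by (rule main_ref[OF assms x_eq y_eq])
  show ?thesis unfolding subtype_def subtree_def
  proof (intro allI impI)
    fix U V' assume U: "so_of ?s U" and V: "si_of ?y V'"
    have "U = ?s" using so_of_siso[OF U ss] .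
    moreover have "V' = ?y" using si_of_siso[OF V sy] .
    ultimately show "\<exists>W W'. si_of U W \<and> so_of V' W' \<and> refines W W'"
      using si_of_refl[OF ss] so_of_refl[OF sy] r by blast
  qed
qed

end
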